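(* Let $K_0,K_1\subset\mathbb D^n$ be non-pluripolar, complete logarithmically convex, compact Reinhardt sets, let $Q_j=\mathrm{Log}\,K_j$ ($j=0,1$) and $Q_t=(1-t)Q_0+tQ_1$ (Minkowski combination) for $0<t<1$. Then $$\mathrm{Covol}(Q_t^\circ)\le \mathrm{Covol}(Q_0^\circ)^{1-t}\,\mathrm{Covol}(Q_1^\circ)^t,\qquad 0<t<1,$$ and if equality holds for some $t\in(0,1)$, then $Q_0=Q_1$.
   Context: $\mathbb D^n$ is the unit polydisk; $\mathbb R^n_-$ and $\mathbb R^n_+$ are the negative and positive orthants. A set $K\subset\mathbb C^n$ is Reinhardt if invariant under $(z_l)\mapsto(e^{i\theta_l}z_l)$. A compact Reinhardt $K\subset\mathbb D^n$ is complete logarithmically convex if $\mathrm{Log}\,K=\{s\in\mathbb R^n:\ (e^{s_1},\dots,e^{s_n})\in K\}$ is a convex subset of $\mathbb R^n_-$ with $\mathrm{Log}\,K+\mathbb R^n_-\subset\mathrm{Log}\,K$. For $Q\subset\mathbb R^n_-$, the copolar is $Q^\circ=\{x\in\mathbb R^n_+:\ \langle x,y\rangle\le -1\ \forall y\in Q\}$ and $\mathrm{Covol}(Q^\circ)=\mathrm{Vol}(\mathbb R^n_+\setminus Q^\circ)$ (Lebesgue measure). *)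

theory Defs
  imports "HOL-Analysis.Analysis"
begin

text \<open>Points of C^n are modelled as complex^'n, points of R^n as real^'n, with n = CARD('n).\<close>

definition unit_polydisk :: "(complex^'n) set" where
  "unit_polydisk = {z. \<forall>i. norm (z$i) < 1}"

definition neg_orthant :: "(real^'n) set" where
  "neg_orthant = {s. \<forall>i. s$i \<le> 0}"

definition pos_orthant :: "(real^'n) set" where
  "pos_orthant = {x. \<forall>i. 0 \<le> x$i}"

definition reinhardt :: "(complex^'n) set \<Rightarrow> bool" where
  "reinhardt K \<longleftrightarrow> (\<forall>z\<in>K. \<forall>\<theta>::real^'n. (\<chi> l. cis (\<theta>$l) * z$l) \<in> K)"

definition Log_set :: "(complex^'n) set \<Rightarrow> (real^'n) set" where
  "Log_set K = {s. (\<chi> l. complex_of_real (exp (s$l))) \<in> K}"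

definition complete_log_convex :: "(complex^'n) set \<Rightarrow> bool" where
  "complete_log_convex K \<longleftrightarrow>
     convex (Log_set K) \<and> Log_set K \<subseteq> neg_orthant \<and>
     (\<forall>s\<in>Log_set K. \<forall>y\<in>neg_orthant. s + y \<in> Log_set K)"

text \<open>Plurisubharmonic functions on an open set V (values in [-inf, +inf)):
  upper semicontinuous, and satisfying the sub-mean value inequality on every closed
  complex disc {a + zeta b : |zeta| <= 1} contained in V. The mean value of the
  upper semicontinuous function on the circle is expressed (equivalently, by monotone
  convergence) as the infimum of the means of its continuous real majorants.\<close>

definition psh_on :: "(complex^'n) set \<Rightarrow> (complex^'n \<Rightarrow> ereal) \<Rightarrow> bool" where
  "psh_on V u \<longleftrightarrow> open V \<and>
     (\<forall>z\<in>V. u z < \<infinity>) \<and>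
     (\<forall>c::real. openin (top_of_set V) {z\<in>V. u z < ereal c}) \<and>
     (\<forall>a b. (\<forall>\<zeta>. cmod \<zeta> \<le> 1 \<longrightarrow> (\<chi> l. a$l + \<zeta> * b$l) \<in> V) \<longrightarrow>
        (\<forall>h::real\<Rightarrow>real. continuous_on {0..2*pi} h \<longrightarrow>
            (\<forall>\<theta>\<in>{0..2*pi}. u (\<chi> l. a$l + cis \<theta> * b$l) \<le> ereal (h \<theta>)) \<longrightarrow>
            u a \<le> ereal (integral {0..2*pi} h / (2*pi))))"

definition pluripolar :: "(complex^'n) set \<Rightarrow> bool" where
  "pluripolar E \<longleftrightarrow>
     (\<forall>p\<in>E. \<exists>V u. p \<in> V \<and> open V \<and> connected V \<and> psh_on V u \<and>
        (\<exists>z\<in>V. u z \<noteq> -\<infinity>) \<and> (\<forall>z\<in>E \<inter> V. u z = -\<infinity>))"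

definition copolar :: "(real^'n) set \<Rightarrow> (real^'n) set" where
  "copolar Q = {x \<in> pos_orthant. \<forall>y\<in>Q. x \<bullet> y \<le> -1}"

definition covol :: "(real^'n) set \<Rightarrow> real" where
  "covol P = measure lborel (pos_orthant - P)"

definition mink_comb :: "real \<Rightarrow> (real^'n) set \<Rightarrow> (real^'n) set \<Rightarrow> (real^'n) set" where
  "mink_comb t Q0 Q1 = {(1 - t) *\<^sub>R a + t *\<^sub>R b | a b. a \<in> Q0 \<and> b \<in> Q1}"

end

theory Submission
  imports Defs "HOL-Probability.Distributions" "HOL-Complex_Analysis.Complex_Analysis"
begin


definition phiQ :: "(real^'n) set \<Rightarrow> real^'n \<Rightarrow> real" where
  "phiQ Q x = Inf ((\<lambda>q. max 0 (- (x \<bullet> q))) ` Q)"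

lemma phiQ_bdd: "bdd_below ((\<lambda>q. max 0 (- (x \<bullet> q))) ` Q)"
  by (rule bdd_belowI[of _ 0]) auto

lemma phiQ_less_iff: "Q \<noteq> {} \<Longrightarrow> phiQ Q x < c \<longleftrightarrow> (\<exists>q\<in>Q. max 0 (- (x \<bullet> q)) < c)"
  unfolding phiQ_def by (subst cInf_less_iff) (auto simp: phiQ_bdd)

lemma phiQ_le: "q \<in> Q \<Longrightarrow> phiQ Q x \<le> max 0 (- (x \<bullet> q))"
  unfolding phiQ_def by (rule cInf_lower) (auto simp: phiQ_bdd)

lemma phiQ_ge: "Q \<noteq> {} \<Longrightarrow> (\<And>q. q \<in> Q \<Longrightarrow> c \<le> max 0 (- (x \<bullet> q))) \<Longrightarrow> c \<le> phiQ Q x"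
  unfolding phiQ_def by (rule cInf_greatest) auto

lemma phiQ_nonneg: "Q \<noteq> {} \<Longrightarrow> 0 \<le> phiQ Q x"
  by (rule phiQ_ge) auto

lemma phiQ_borel[measurable]: "Q \<noteq> {} \<Longrightarrow> phiQ Q \<in> borel_measurable borel"
proof (subst borel_measurable_iff_less, intro allI)
  fix a :: real assume Q: "Q \<noteq> {}"
  have "{w \<in> space borel. phiQ Q w < a} = (\<Union>q\<in>Q. {w. max 0 (- (w \<bullet> q)) < a})"
    using phiQ_less_iff[OF Q] by auto
  also have "open \<dots>"
    by (intro open_UN ballI open_Collect_less continuous_intros)
  finally show "{w \<in> space borel. phiQ Q w < a} \<in> sets borel" by simp
qed

lemma pos_orthant_borel[measurable]: "(pos_orthant :: (real^'n) set) \<in> sets borel"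
proof -
  have "pos_orthant = (\<Inter>i. {x::real^'n. 0 \<le> x$i})" unfolding pos_orthant_def by auto
  also have "closed \<dots>" by (intro closed_INT ballI closed_Collect_le continuous_intros)
  finally show ?thesis by simp
qed

lemma exp_tail: "(\<integral>\<^sup>+s. ennreal (exp (-s)) * indicator {c<..} s \<partial>lborel) = ennreal (exp (-c))"
proof -
  have "(\<integral>\<^sup>+s. ennreal (exp (-s)) * indicator {c<..} s \<partial>lborel)
      = (\<integral>\<^sup>+s. ennreal (exp (-(c + 1 * s))) * indicator {c<..} (c + 1 * s) \<partial>lborel)"
    using nn_integral_real_affine[of "\<lambda>s. ennreal (exp (-s)) * indicator {c<..} s" 1 c] by simp
  also have "\<dots> = (\<integral>\<^sup>+s. ennreal (exp (-c)) * (ennreal (0^0 * exp (-s)) * indicator {0..} s) \<partial>lborel)"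
    apply (rule nn_integral_cong_AE)
    using AE_lborel_singleton[of 0]
    by eventually_elim (auto simp: indicator_def exp_diff exp_minus ennreal_mult'[symmetric] field_simps)
  also have "\<dots> = ennreal (exp (-c)) * (\<integral>\<^sup>+s. ennreal (0^0 * exp (-s)) * indicator {0..} s \<partial>lborel)"
    by (rule nn_integral_cmult) auto
  also have "(\<integral>\<^sup>+s. ennreal (0^0 * exp (-s)) * indicator {0..} s \<partial>lborel) = 1"
    using nn_intergal_power_times_exp_Ici[of 0] by simp
  finally show ?thesis by simp
qed

lemma emeasure_scale:
  fixes A :: "(real^'n) set"
  assumes A: "A \<in> sets borel" and s: "s > 0"
  shows "emeasure lborel A = ennreal (s ^ CARD('n)) * emeasure lborel ((\<lambda>x. s *\<^sub>R x) -` A)"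
proof -
  have "emeasure lborel A = emeasure (density (distr lborel borel (\<lambda>x. 0 + s *\<^sub>R x)) (\<lambda>_. \<bar>s\<bar>^DIM(real^'n))) A"
    using lborel_affine[of s 0] s by (metis less_irrefl)
  also have "\<dots> = ennreal (s ^ CARD('n)) * emeasure lborel ((\<lambda>x. s *\<^sub>R x) -` A)"
    using A s by (simp add: emeasure_density emeasure_distr nn_integral_cmult_indicator)
  finally show ?thesis .
qed

lemma max0_scale: "s > 0 \<Longrightarrow> max 0 (- ((s *\<^sub>R x) \<bullet> q)) = s * max 0 (- (x \<bullet> q))"
  by (simp add: max_def mult_le_0_iff zero_le_mult_iff)

lemma level_scale:
  fixes Q :: "(real^'n) set"
  assumes Q: "Q \<noteq> {}" and s: "s > 0"
  shows "(\<lambda>x. s *\<^sub>R x) -` {x \<in> pos_orthant. phiQ Q x < s} = {x \<in> pos_orthant. phiQ Q x < 1}"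
proof -
  have 1: "(s *\<^sub>R x) \<in> pos_orthant \<longleftrightarrow> x \<in> pos_orthant" for x :: "real^'n"
    using s by (simp add: pos_orthant_def zero_le_mult_iff)
  have 3: "\<And>m. s * m < s \<longleftrightarrow> m < 1"
    using s mult_less_cancel_left_pos[of s _ 1] by simp
  have 2: "phiQ Q (s *\<^sub>R x) < s \<longleftrightarrow> phiQ Q x < 1" for x :: "real^'n"
    unfolding phiQ_less_iff[OF Q] max0_scale[OF s] 3 ..
  show ?thesis using 1 2 by auto
qed

lemma level_empty:
  fixes Q :: "(real^'n) set"
  assumes "Q \<noteq> {}" "s \<le> 0"
  shows "{x \<in> pos_orthant. phiQ Q x < s} = {}"
proof -
  have "\<not> phiQ Q x < s" for x using phiQ_nonneg[OF assms(1), of x] assms(2) by linarith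
  then show ?thesis by auto
qed

lemma layer:
  fixes Q :: "(real^'n) set" assumes Q: "Q \<noteq> {}"
  shows "(\<integral>\<^sup>+x. ennreal (indicator pos_orthant x * exp (- phiQ Q x)) \<partial>lborel)
       = ennreal (fact CARD('n)) * emeasure lborel {x \<in> pos_orthant. phiQ Q x < 1}"
proof -
  let ?A = "\<lambda>s. {x \<in> pos_orthant. phiQ Q x < s}"
  define V where "V = emeasure lborel (?A 1)"
  note meas[measurable] = phiQ_borel[OF Q]
  have "(\<integral>\<^sup>+x. ennreal (indicator pos_orthant x * exp (- phiQ Q x)) \<partial>lborel)
      = (\<integral>\<^sup>+x. (\<integral>\<^sup>+s. ennreal (exp (-s)) * indicator {p. fst p \<in> pos_orthant \<and> phiQ Q (fst p) < snd p} (x, s) \<partial>lborel) \<partial>lborel)"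
  proof (rule nn_integral_cong)
    fix x :: "real^'n"
    have "(\<integral>\<^sup>+s. ennreal (exp (-s)) * indicator {p. fst p \<in> pos_orthant \<and> phiQ Q (fst p) < snd p} (x, s) \<partial>lborel)
        = (\<integral>\<^sup>+s. indicator pos_orthant x * (ennreal (exp (-s)) * indicator {phiQ Q x<..} s) \<partial>lborel)"
      by (rule nn_integral_cong) (auto simp: indicator_def)
    also have "\<dots> = indicator pos_orthant x * ennreal (exp (- phiQ Q x))"
      by (subst nn_integral_cmult) (auto simp: exp_tail)
    finally show "ennreal (indicator pos_orthant x * exp (- phiQ Q x)) =
      (\<integral>\<^sup>+s. ennreal (exp (-s)) * indicator {p. fst p \<in> pos_orthant \<and> phiQ Q (fst p) < snd p} (x, s) \<partial>lborel)"
      by (simp add: indicator_def)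
  qed
  also have "\<dots> = (\<integral>\<^sup>+s. (\<integral>\<^sup>+x. ennreal (exp (-s)) * indicator {p. fst p \<in> pos_orthant \<and> phiQ Q (fst p) < snd p} (x, s) \<partial>lborel) \<partial>lborel)"
    by (rule lborel_pair.Fubini'[symmetric]) measurable
  also have "\<dots> = (\<integral>\<^sup>+s. ennreal (exp (-s)) * emeasure lborel (?A s) \<partial>lborel)"
  proof (rule nn_integral_cong)
    fix s :: real
    have "(\<integral>\<^sup>+x. ennreal (exp (-s)) * indicator {p. fst p \<in> pos_orthant \<and> phiQ Q (fst p) < snd p} (x, s) \<partial>lborel)
       = (\<integral>\<^sup>+x. ennreal (exp (-s)) * indicator (?A s) x \<partial>lborel)"
      by (rule nn_integral_cong) (auto simp: indicator_def)
    also have "\<dots> = ennreal (exp (-s)) * emeasure lborel (?A s)"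
      by (rule nn_integral_cmult_indicator) measurable
    finally show "(\<integral>\<^sup>+x. ennreal (exp (-s)) * indicator {p. fst p \<in> pos_orthant \<and> phiQ Q (fst p) < snd p} (x, s) \<partial>lborel)
       = ennreal (exp (-s)) * emeasure lborel (?A s)" .
  qed
  also have "\<dots> = (\<integral>\<^sup>+s. ennreal (s ^ CARD('n) * exp (-s)) * indicator {0..} s * V \<partial>lborel)"
  proof (rule nn_integral_cong)
    fix s :: real
    show "ennreal (exp (-s)) * emeasure lborel (?A s) = ennreal (s ^ CARD('n) * exp (-s)) * indicator {0..} s * V"
    proof (cases "s > 0")
      case True
      have "emeasure lborel (?A s) = ennreal (s ^ CARD('n)) * emeasure lborel ((\<lambda>x. s *\<^sub>R x) -` ?A s)"
        by (rule emeasure_scale[OF _ True]) measurable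
      also have "(\<lambda>x. s *\<^sub>R x) -` ?A s = ?A 1" by (rule level_scale[OF Q True])
      finally show ?thesis using True
        by (simp add: V_def ennreal_mult' mult.assoc mult.left_commute)
    next
      case False
      have e: "?A s = {}" using level_empty[OF Q, of s] False by auto
      show ?thesis unfolding e using False
        by (cases "s = 0") (auto simp: indicator_def)
    qed
  qed
  also have "\<dots> = (\<integral>\<^sup>+s. ennreal (s ^ CARD('n) * exp (-s)) * indicator {0..} s \<partial>lborel) * V"
    by (rule nn_integral_multc) measurable
  also have "\<dots> = ennreal (fact CARD('n)) * V"
    using nn_intergal_power_times_exp_Ici[of "CARD('n)"] by simp
  finally show ?thesis unfolding V_def .
qed


lemma cbox_emeasure_pos:
  fixes u v :: "real^'n" assumes uv: "\<And>i. u$i < v$i"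
  shows "0 < emeasure lborel (cbox u v)"
proof -
  have B: "\<forall>b\<in>Basis. u \<bullet> b < v \<bullet> b"
    using uv by (auto simp: Basis_vec_def cart_eq_inner_axis[symmetric])
  then have "0 < (\<Prod>b\<in>Basis. (v - u) \<bullet> b)"
    by (intro prod_pos) (auto simp: inner_diff_left)
  then show ?thesis using B by (auto simp: emeasure_lborel_cbox_eq less_imp_le)
qed

lemma AE_cbox_contra:
  fixes u v :: "real^'n"
  assumes "AE x in lborel. P x" "\<And>i. u$i < v$i" "\<And>x. x \<in> cbox u v \<Longrightarrow> \<not> P x"
  shows False
proof -
  obtain N where N: "{x \<in> space lborel. \<not> P x} \<subseteq> N" "N \<in> null_sets lborel"
    by (rule AE_E[OF assms(1)]) (simp add: null_sets_def)
  have "cbox u v \<subseteq> N" using N(1) assms(3) by auto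
  then have "emeasure lborel (cbox u v) \<le> emeasure lborel N"
    using N(2) by (intro emeasure_mono) auto
  then show False using N(2) cbox_emeasure_pos[of u v, OF assms(2)] by auto
qed

lemma amgm_strict:
  fixes u v :: real assumes "0 < u" "0 < v" "u \<noteq> v"
  shows "sqrt (u * v) < (u + v) / 2"
proof -
  have "u * v < ((u + v) / 2)^2"
  proof -
    have "0 < (u - v)^2" using assms by simp
    then show ?thesis by (simp add: power2_eq_square field_simps)
  qed
  then have "sqrt (u * v) < sqrt (((u + v) / 2)^2)" by (rule real_sqrt_less_mono)
  also have "\<dots> = (u + v) / 2" using assms by simp
  finally show ?thesis .
qed

lemma young_strict_aux:
  fixes u v t :: real
  assumes u: "0 < u" and v: "0 < v" and t: "0 < t" "t \<le> 1/2" and uv: "u \<noteq> v"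
  shows "u powr (1 - t) * v powr t < (1 - t) * u + t * v"
proof -
  define w where "w = sqrt (u * v)"
  have w: "0 < w" using u v by (simp add: w_def)
  have "u powr (1 - t) * v powr t = u powr (1 - 2*t) * w powr (2*t)"
  proof -
    have "w powr (2*t) = (w powr 2) powr t" by (simp add: powr_powr mult.commute)
    also have "w powr 2 = u * v" using u v w by (simp add: w_def powr_numeral)
    also have "(u * v) powr t = u powr t * v powr t" using u v by (simp add: powr_mult)
    finally have "w powr (2*t) = u powr t * v powr t" .
    then have "u powr (1 - 2*t) * w powr (2*t) = (u powr (1 - 2*t) * u powr t) * v powr t" by simp
    also have "u powr (1 - 2*t) * u powr t = u powr (1 - t)" using u by (simp add: powr_add[symmetric])
    finally show ?thesis by simp
  qed
  also have "\<dots> \<le> (1 - 2*t) * u + (2*t) * w"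
    using t u w by (intro Youngs_inequality_0) auto
  also have "\<dots> < (1 - 2*t) * u + (2*t) * ((u + v) / 2)"
    using amgm_strict[OF u v uv] t by (simp add: w_def)
  also have "\<dots> = (1 - t) * u + t * v" by (simp add: field_simps)
  finally show ?thesis .
qed

lemma young_strict:
  fixes u v t :: real
  assumes u: "0 < u" and v: "0 < v" and t: "0 < t" "t < 1" and uv: "u \<noteq> v"
  shows "u powr (1 - t) * v powr t < (1 - t) * u + t * v"
proof (cases "t \<le> 1/2")
  case True then show ?thesis using young_strict_aux[OF u v t(1) True uv] by simp
next
  case False
  have "v powr (1 - (1 - t)) * u powr (1 - t) < (1 - (1 - t)) * v + (1 - t) * u"
    using False t by (intro young_strict_aux[OF v u]) (use uv in auto)
  then show ?thesis by (simp add: algebra_simps)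
qed

lemma young_le:
  fixes u v t :: real
  assumes "0 \<le> u" "0 \<le> v" "0 \<le> t" "t \<le> 1"
  shows "u powr (1 - t) * v powr t \<le> (1 - t) * u + t * v"
proof (cases "u = 0 \<or> v = 0")
  case True then show ?thesis using assms by auto
next
  case False then show ?thesis using assms by (intro Youngs_inequality_0) auto
qed


lemma Acomp:
  fixes Q :: "(real^'n) set" assumes "Q \<noteq> {}"
  shows "pos_orthant - copolar Q = {x \<in> pos_orthant. phiQ Q x < 1}"
  unfolding copolar_def using phiQ_less_iff[OF assms] by (auto simp: not_le)

lemma neg_inner_sum: "- (x \<bullet> q) = (\<Sum>j\<in>UNIV. x$j * (- q$j))" for x q :: "real^'n"
  by (simp add: inner_vec_def sum_negf)

lemma inner_pos_neg:
  fixes x q :: "real^'n"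
  assumes "x \<in> pos_orthant" "\<And>i. q$i \<le> 0"
  shows "x \<bullet> q \<le> 0"
proof -
  have "0 \<le> - (x \<bullet> q)" unfolding neg_inner_sum
    using assms by (intro sum_nonneg) (auto simp: pos_orthant_def mult_nonneg_nonpos)
  then show ?thesis by simp
qed

lemma V_fin:
  fixes Q :: "(real^'n) set"
  assumes Q: "Q \<noteq> {}" and d: "0 < d" "\<forall>q\<in>Q. \<forall>i. q$i \<le> -d"
  shows "emeasure lborel {x \<in> pos_orthant. phiQ Q x < 1} < \<infinity>"
proof -
  have "{x \<in> pos_orthant. phiQ Q x < 1} \<subseteq> cbox 0 (\<chi> i. 1 / d)"
  proof
    fix x :: "real^'n" assume x: "x \<in> {x \<in> pos_orthant. phiQ Q x < 1}"
    then obtain q where q: "q \<in> Q" "max 0 (- (x \<bullet> q)) < 1"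
      using phiQ_less_iff[OF Q] by auto
    have "x$i \<le> 1 / d" for i
    proof -
      have "q$i \<le> - d" using q(1) d(2) by blast
      then have "d \<le> - q$i" by linarith
      then have "x$i * d \<le> x$i * (- q$i)"
        using x by (intro mult_left_mono) (auto simp: pos_orthant_def)
      also have "\<dots> \<le> (\<Sum>j\<in>UNIV. x$j * (- q$j))"
      proof (intro member_le_sum)
        fix j assume "j \<in> UNIV - {i}"
        have "q$j \<le> - d" using q(1) d(2) by blast
        then show "0 \<le> x$j * (- q$j)" using x d by (intro mult_nonneg_nonneg) (auto simp: pos_orthant_def)
      qed auto
      also have "\<dots> = - (x \<bullet> q)" by (simp add: neg_inner_sum)
      also have "\<dots> < 1" using q by simp
      finally show ?thesis using d by (simp add: field_simps)
    qed
    then show "x \<in> cbox 0 (\<chi> i. 1 / d)" using x by (auto simp: mem_box_cart pos_orthant_def)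
  qed
  then have "emeasure lborel {x \<in> pos_orthant. phiQ Q x < 1} \<le> emeasure lborel (cbox 0 (\<chi> i. 1 / d) :: (real^'n) set)"
    by (intro emeasure_mono) auto
  also have "\<dots> < \<infinity>" by (rule emeasure_lborel_cbox_finite)
  finally show ?thesis .
qed

lemma V_pos:
  fixes Q :: "(real^'n) set"
  assumes Q: "Q \<noteq> {}"
  shows "0 < emeasure lborel {x \<in> pos_orthant. phiQ Q x < 1}"
proof -
  obtain q where q: "q \<in> Q" using Q by auto
  define M where "M = (\<Sum>j\<in>UNIV. \<bar>q$j\<bar>) + 1"
  have M: "1 \<le> M" unfolding M_def by (simp add: sum_nonneg)
  define e where "e = 1 / M"
  have e: "0 < e" using M by (simp add: e_def)
  have "cbox 0 (\<chi> i. e) \<subseteq> {x \<in> pos_orthant. phiQ Q x < 1}"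
  proof
    fix x :: "real^'n" assume x: "x \<in> cbox 0 (\<chi> i. e)"
    then have x0: "x \<in> pos_orthant" by (auto simp: mem_box_cart pos_orthant_def)
    have "- (x \<bullet> q) = (\<Sum>j\<in>UNIV. x$j * (- q$j))" by (simp add: neg_inner_sum)
    also have "\<dots> \<le> (\<Sum>j\<in>UNIV. e * \<bar>q$j\<bar>)"
    proof (intro sum_mono)
      fix j
      have "x$j * (- q$j) \<le> x$j * \<bar>q$j\<bar>" using x0 by (intro mult_left_mono) (auto simp: pos_orthant_def)
      also have "\<dots> \<le> e * \<bar>q$j\<bar>" using x by (intro mult_right_mono) (auto simp: mem_box_cart)
      finally show "x$j * (- q$j) \<le> e * \<bar>q$j\<bar>" .
    qed
    also have "\<dots> = e * (M - 1)" by (simp add: M_def sum_distrib_left)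
    also have "\<dots> < 1" using M by (simp add: e_def field_simps)
    finally have "max 0 (- (x \<bullet> q)) < 1" by simp
    then show "x \<in> {x \<in> pos_orthant. phiQ Q x < 1}"
      using x0 q phiQ_less_iff[OF Q] by auto
  qed
  then have "emeasure lborel (cbox 0 (\<chi> i. e) :: (real^'n) set) \<le> emeasure lborel {x \<in> pos_orthant. phiQ Q x < 1}"
    by (intro emeasure_mono) (use phiQ_borel[OF Q] in measurable)
  moreover have "0 < emeasure lborel (cbox 0 (\<chi> i. e) :: (real^'n) set)"
    using e by (intro cbox_emeasure_pos) simp
  ultimately show ?thesis by simp
qed

lemma phi_mink:
  fixes Q0 Q1 :: "(real^'n) set"
  assumes ne: "Q0 \<noteq> {}" "Q1 \<noteq> {}" and neg0: "\<forall>q\<in>Q0. \<forall>i. q$i \<le> 0" and neg1: "\<forall>q\<in>Q1. \<forall>i. q$i \<le> 0"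
    and t: "0 \<le> t" "t \<le> 1" and x: "x \<in> pos_orthant"
  shows "(1 - t) * phiQ Q0 x + t * phiQ Q1 x \<le> phiQ (mink_comb t Q0 Q1) x"
proof (rule phiQ_ge)
  show "mink_comb t Q0 Q1 \<noteq> {}" using ne by (auto simp: mink_comb_def)
  fix q assume "q \<in> mink_comb t Q0 Q1"
  then obtain a b where ab: "a \<in> Q0" "b \<in> Q1" "q = (1 - t) *\<^sub>R a + t *\<^sub>R b"
    by (auto simp: mink_comb_def)
  have "(1 - t) * phiQ Q0 x \<le> (1 - t) * max 0 (- (x \<bullet> a))"
    using t by (intro mult_left_mono phiQ_le ab) auto
  also have "max 0 (- (x \<bullet> a)) = - (x \<bullet> a)"
    using inner_pos_neg[OF x, of a] neg0 ab by auto
  finally have 1: "(1 - t) * phiQ Q0 x \<le> (1 - t) * (- (x \<bullet> a))" .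
  have "t * phiQ Q1 x \<le> t * max 0 (- (x \<bullet> b))"
    using t by (intro mult_left_mono phiQ_le ab) auto
  also have "max 0 (- (x \<bullet> b)) = - (x \<bullet> b)"
    using inner_pos_neg[OF x, of b] neg1 ab by auto
  finally have 2: "t * phiQ Q1 x \<le> t * (- (x \<bullet> b))" .
  have "- (x \<bullet> q) = (1 - t) * (- (x \<bullet> a)) + t * (- (x \<bullet> b))"
    unfolding ab(3) by (simp add: inner_add_right inner_diff_right algebra_simps)
  then show "(1 - t) * phiQ Q0 x + t * phiQ Q1 x \<le> max 0 (- (x \<bullet> q))"
    using 1 2 by linarith
qed


lemma mainA:
  fixes Q0 Q1 :: "(real^'n) set"
  assumes ne: "Q0 \<noteq> {}" "Q1 \<noteq> {}" and d: "0 < d" "\<forall>q\<in>Q0. \<forall>i. q$i \<le> -d" "\<forall>q\<in>Q1. \<forall>i. q$i \<le> -d"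
    and t: "0 < t" "t < 1"
  shows "covol (copolar (mink_comb t Q0 Q1)) \<le> covol (copolar Q0) powr (1-t) * covol (copolar Q1) powr t \<and>
    (covol (copolar (mink_comb t Q0 Q1)) = covol (copolar Q0) powr (1-t) * covol (copolar Q1) powr t \<longrightarrow>
      (\<exists>\<kappa>. AE x in lborel. x \<in> pos_orthant \<longrightarrow> phiQ Q1 x = phiQ Q0 x + \<kappa>))"
proof -
  define Qt where "Qt = mink_comb t Q0 Q1"
  have net: "Qt \<noteq> {}" using ne by (auto simp: Qt_def mink_comb_def)
  have dt: "\<forall>q\<in>Qt. \<forall>i. q$i \<le> -d"
  proof (intro ballI allI)
    fix q i assume "q \<in> Qt"
    then obtain a b where ab: "a \<in> Q0" "b \<in> Q1" "q = (1-t) *\<^sub>R a + t *\<^sub>R b"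
      by (auto simp: Qt_def mink_comb_def)
    have "a$i \<le> -d" "b$i \<le> -d" using ab d by auto
    then have "(1-t) * a$i + t * b$i \<le> (1-t)*(-d) + t*(-d)"
      using t by (intro add_mono mult_left_mono) auto
    moreover have "q$i = (1-t) * a$i + t * b$i" unfolding ab(3) by simp
    ultimately show "q$i \<le> -d" by (simp add: algebra_simps)
  qed
  define c where "c = real (fact CARD('n))"
  have c: "0 < c" by (simp add: c_def)
  define A where "A = (\<lambda>Q::(real^'n) set. {x \<in> pos_orthant. phiQ Q x < 1})"
  define f where "f = (\<lambda>(Q::(real^'n) set) x. indicator pos_orthant x * exp (- phiQ Q x) :: real)"
  have fmeas: "f Q \<in> borel_measurable lborel" if "Q \<noteq> {}" for Q :: "(real^'n) set"
    using phiQ_borel[OF that] unfolding f_def by measurable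
  have key: "integrable lborel (f Q) \<and> integral\<^sup>L lborel (f Q) = c * measure lborel (A Q) \<and>
      covol (copolar Q) = measure lborel (A Q) \<and> 0 < measure lborel (A Q)"
    if Q: "Q \<noteq> {}" "\<forall>q\<in>Q. \<forall>i. q$i \<le> -d" for Q :: "(real^'n) set"
  proof -
    have fin: "emeasure lborel (A Q) < \<infinity>" using V_fin[OF Q(1) d(1) Q(2)] by (simp add: A_def)
    have pos: "0 < emeasure lborel (A Q)" using V_pos[OF Q(1)] by (simp add: A_def)
    have em: "emeasure lborel (A Q) = ennreal (measure lborel (A Q))"
      using fin by (simp add: emeasure_eq_ennreal_measure)
    have "(\<integral>\<^sup>+x. ennreal (f Q x) \<partial>lborel) = ennreal (c * measure lborel (A Q))"
      using layer[OF Q(1)] em by (simp add: f_def A_def c_def ennreal_mult)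
    then have "integrable lborel (f Q) \<and> integral\<^sup>L lborel (f Q) = c * measure lborel (A Q)"
    proof (subst nn_integral_eq_integrable[symmetric])
      show "f Q \<in> borel_measurable lborel" by (rule fmeas[OF Q(1)])
      show "0 \<le> c * measure lborel (A Q)" using c by simp
    qed (auto simp: f_def)
    moreover have "covol (copolar Q) = measure lborel (A Q)"
      by (simp add: covol_def Acomp[OF Q(1)] A_def)
    moreover have "0 < measure lborel (A Q)" using pos em by simp
    ultimately show ?thesis by auto
  qed
  define V0 where "V0 = measure lborel (A Q0)"
  define V1 where "V1 = measure lborel (A Q1)"
  define Vt where "Vt = measure lborel (A Qt)"
  note k0 = key[OF ne(1) d(2), folded V0_def]
  note k1 = key[OF ne(2) d(3), folded V1_def]
  note kt = key[OF net dt, folded Vt_def]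
  define a where "a = c * V0"
  define b where "b = c * V1"
  have a: "0 < a" and b: "0 < b" using k0 k1 c by (auto simp: a_def b_def)
  define K where "K = a powr (1-t) * b powr t"
  have K: "0 < K" using a b by (simp add: K_def)
  have Keq: "K = c * (V0 powr (1-t) * V1 powr t)"
  proof -
    have "K = (c powr (1-t) * c powr t) * (V0 powr (1-t) * V1 powr t)"
      using c k0 k1 by (simp add: K_def a_def b_def powr_mult)
    also have "c powr (1-t) * c powr t = c" using c by (simp add: powr_add[symmetric])
    finally show ?thesis .
  qed
  define P where "P = (\<lambda>x. f Q0 x powr (1-t) * f Q1 x powr t)"
  define H where "H = (\<lambda>x. K * ((1-t) / a * f Q0 x + t / b * f Q1 x))"
  have neg0: "\<forall>q\<in>Q0. \<forall>i. q$i \<le> 0" and neg1: "\<forall>q\<in>Q1. \<forall>i. q$i \<le> 0"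
    using d by (meson order_trans neg_le_0_iff_le less_imp_le)+
  have EP: "f Qt x \<le> P x" for x
  proof (cases "x \<in> pos_orthant")
    case True
    have "(1 - t) * phiQ Q0 x + t * phiQ Q1 x \<le> phiQ Qt x"
      unfolding Qt_def using phi_mink[OF ne neg0 neg1 _ _ True] t by auto
    then have "exp (- phiQ Qt x) \<le> exp (- ((1 - t) * phiQ Q0 x + t * phiQ Q1 x))" by simp
    also have "\<dots> = exp (- phiQ Q0 x) powr (1-t) * exp (- phiQ Q1 x) powr t"
      by (simp add: powr_def exp_add[symmetric] algebra_simps)
    finally show ?thesis using True by (simp add: P_def f_def)
  next
    case False then show ?thesis by (simp add: P_def f_def)
  qed
  have P0: "0 \<le> P x" for x by (simp add: P_def)
  have PH: "P x \<le> H x" for x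
  proof -
    have f0: "0 \<le> f Q0 x" and f1: "0 \<le> f Q1 x" by (auto simp: f_def)
    have "(f Q0 x / a) powr (1-t) * (f Q1 x / b) powr t \<le> (1-t) * (f Q0 x / a) + t * (f Q1 x / b)"
      using f0 f1 a b t by (intro young_le) auto
    then have "K * ((f Q0 x / a) powr (1-t) * (f Q1 x / b) powr t) \<le> K * ((1-t) * (f Q0 x / a) + t * (f Q1 x / b))"
      using K by (intro mult_left_mono) auto
    moreover have "K * ((f Q0 x / a) powr (1-t) * (f Q1 x / b) powr t) = P x"
      using a b f0 f1 by (simp add: K_def P_def powr_divide field_simps)
    ultimately show ?thesis by (simp add: H_def)
  qed
  have Hint: "integrable lborel H" unfolding H_def using k0 k1 by auto
  have HI: "integral\<^sup>L lborel H = K"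
  proof -
    have "integral\<^sup>L lborel H = K * ((1-t) / a * integral\<^sup>L lborel (f Q0) + t / b * integral\<^sup>L lborel (f Q1))"
      unfolding H_def using k0 k1 by (simp add: integral_add)
    also have "\<dots> = K" using k0 k1 a b c by (simp add: a_def b_def)
    finally show ?thesis .
  qed
  have Pmeas: "P \<in> borel_measurable lborel"
    unfolding P_def using fmeas[OF ne(1)] fmeas[OF ne(2)] by measurable
  have Pint: "integrable lborel P"
    by (rule Bochner_Integration.integrable_bound[OF Hint Pmeas]) (auto intro!: AE_I2 simp: P0 intro: order_trans[OF PH abs_ge_self])
  have I1: "c * Vt \<le> integral\<^sup>L lborel P"
  proof -
    have "integral\<^sup>L lborel (f Qt) \<le> integral\<^sup>L lborel P"
      using kt EP by (intro integral_mono Pint) auto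
    then show ?thesis using kt by simp
  qed
  have I2: "integral\<^sup>L lborel P \<le> K"
    using PH HI by (auto intro!: integral_mono Pint Hint simp flip: HI)
  have ineq: "Vt \<le> V0 powr (1-t) * V1 powr t"
  proof -
    have "c * Vt \<le> c * (V0 powr (1-t) * V1 powr t)" using I1 I2 Keq by simp
    then show ?thesis using c by (simp add: mult_le_cancel_left_pos)
  qed
  have eqcase: "\<exists>\<kappa>. AE x in lborel. x \<in> pos_orthant \<longrightarrow> phiQ Q1 x = phiQ Q0 x + \<kappa>"
    if eq: "Vt = V0 powr (1-t) * V1 powr t"
  proof -
    have "integral\<^sup>L lborel (\<lambda>x. H x - P x) = K - integral\<^sup>L lborel P"
      using Hint Pint HI by simp
    also have "\<dots> \<le> 0" using I1 eq Keq by simp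
    finally have "integral\<^sup>L lborel (\<lambda>x. H x - P x) \<le> 0" .
    moreover have "0 \<le> integral\<^sup>L lborel (\<lambda>x. H x - P x)"
      using PH by (intro integral_nonneg_AE) auto
    ultimately have "integral\<^sup>L lborel (\<lambda>x. H x - P x) = 0" by simp
    then have AE: "AE x in lborel. H x - P x = 0"
      using PH Hint Pint by (subst (asm) integral_nonneg_eq_0_iff_AE) auto
    show ?thesis
    proof (intro exI[of _ "ln a - ln b"])
      show "AE x in lborel. x \<in> pos_orthant \<longrightarrow> phiQ Q1 x = phiQ Q0 x + (ln a - ln b)"
        using AE
      proof eventually_elim
        case (elim x)
        show ?case
        proof
          assume x: "x \<in> pos_orthant"
          define u where "u = f Q0 x / a"
          define v where "v = f Q1 x / b"
          have u: "0 < u" and v: "0 < v" using x a b by (auto simp: u_def v_def f_def)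
          have "u = v"
          proof (rule ccontr)
            assume "u \<noteq> v"
            then have "u powr (1-t) * v powr t < (1-t) * u + t * v" using young_strict[OF u v t] by simp
            then have "K * (u powr (1-t) * v powr t) < K * ((1-t) * u + t * v)" using K by simp
            moreover have "K * (u powr (1-t) * v powr t) = P x"
              using a b u v by (simp add: K_def P_def u_def v_def powr_divide field_simps)
            moreover have "K * ((1-t) * u + t * v) = H x" by (simp add: H_def u_def v_def)
            ultimately show False using elim by simp
          qed
          then have "exp (- phiQ Q0 x) / a = exp (- phiQ Q1 x) / b" using x by (simp add: u_def v_def f_def)
          then have "ln (exp (- phiQ Q0 x) / a) = ln (exp (- phiQ Q1 x) / b)" by simp
          then have "- phiQ Q0 x - ln a = - phiQ Q1 x - ln b" using a b by (simp add: ln_div)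
          then show "phiQ Q1 x = phiQ Q0 x + (ln a - ln b)" by simp
        qed
      qed
    qed
  qed
  show ?thesis
    using ineq eqcase k0 k1 kt unfolding Qt_def[symmetric] by auto
qed


lemma box_bound:
  fixes x q :: "real^'n"
  assumes x: "x \<in> cbox 0 (\<chi> i. e)"
  shows "- (x \<bullet> q) \<le> e * (\<Sum>j\<in>UNIV. \<bar>q$j\<bar>)"
proof -
  have "- (x \<bullet> q) = (\<Sum>j\<in>UNIV. x$j * (- q$j))" by (simp add: neg_inner_sum)
  also have "\<dots> \<le> (\<Sum>j\<in>UNIV. e * \<bar>q$j\<bar>)"
  proof (intro sum_mono)
    fix j
    have "x$j * (- q$j) \<le> x$j * \<bar>q$j\<bar>" using x by (intro mult_left_mono) (auto simp: mem_box_cart)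
    also have "\<dots> \<le> e * \<bar>q$j\<bar>" using x by (intro mult_right_mono) (auto simp: mem_box_cart)
    finally show "x$j * (- q$j) \<le> e * \<bar>q$j\<bar>" .
  qed
  also have "\<dots> = e * (\<Sum>j\<in>UNIV. \<bar>q$j\<bar>)" by (simp add: sum_distrib_left)
  finally show ?thesis .
qed

lemma kappa_zero:
  fixes Q0 Q1 :: "(real^'n) set"
  assumes ne: "Q0 \<noteq> {}" "Q1 \<noteq> {}"
    and AE: "AE x in lborel. x \<in> pos_orthant \<longrightarrow> phiQ Q1 x = phiQ Q0 x + \<kappa>"
  shows "\<kappa> = 0"
proof (rule ccontr)
  assume k: "\<kappa> \<noteq> 0"
  obtain q0 q1 where q: "q0 \<in> Q0" "q1 \<in> Q1" using ne by auto
  define S0 where "S0 = (\<Sum>j\<in>UNIV. \<bar>q0$j\<bar>)"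
  define S1 where "S1 = (\<Sum>j\<in>UNIV. \<bar>q1$j\<bar>)"
  have S: "0 \<le> S0" "0 \<le> S1" by (auto simp: S0_def S1_def intro: sum_nonneg)
  define e where "e = \<bar>\<kappa>\<bar> / (2 * (S0 + S1 + 1))"
  have e: "0 < e" using k S by (simp add: e_def)
  have eS0: "e * S0 < \<bar>\<kappa>\<bar>" and eS1: "e * S1 < \<bar>\<kappa>\<bar>"
  proof -
    have D: "S0 + S1 + 1 \<noteq> 0" using S by linarith
    have "e * (S0 + S1 + 1) = \<bar>\<kappa>\<bar> / 2" using D by (simp add: e_def field_simps)
    moreover have "e * S0 \<le> e * (S0 + S1 + 1)" "e * S1 \<le> e * (S0 + S1 + 1)"
      using e S by (intro mult_left_mono; linarith)+
    moreover have "\<bar>\<kappa>\<bar> / 2 < \<bar>\<kappa>\<bar>" using k by simp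
    ultimately show "e * S0 < \<bar>\<kappa>\<bar>" "e * S1 < \<bar>\<kappa>\<bar>" by linarith+
  qed
  show False
  proof (rule AE_cbox_contra[OF AE, of 0 "\<chi> i. e"])
    show "\<And>i. (0::real^'n)$i < (\<chi> i. e)$i" using e by simp
    fix x :: "real^'n" assume x: "x \<in> cbox 0 (\<chi> i. e)"
    have xp: "x \<in> pos_orthant" using x by (auto simp: mem_box_cart pos_orthant_def)
    have "phiQ Q0 x \<le> max 0 (- (x \<bullet> q0))" by (rule phiQ_le[OF q(1)])
    also have "\<dots> \<le> e * S0" using box_bound[OF x, of q0] e S by (simp add: S0_def)
    finally have p0: "phiQ Q0 x < \<bar>\<kappa>\<bar>" using eS0 by simp
    have "phiQ Q1 x \<le> max 0 (- (x \<bullet> q1))" by (rule phiQ_le[OF q(2)])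
    also have "\<dots> \<le> e * S1" using box_bound[OF x, of q1] e S by (simp add: S1_def)
    finally have p1: "phiQ Q1 x < \<bar>\<kappa>\<bar>" using eS1 by simp
    show "\<not> (x \<in> pos_orthant \<longrightarrow> phiQ Q1 x = phiQ Q0 x + \<kappa>)"
      using p0 p1 phiQ_nonneg[OF ne(1), of x] phiQ_nonneg[OF ne(2), of x] xp by auto
  qed
qed

lemma sep_sub:
  fixes Q0 Q1 :: "(real^'n) set"
  assumes ne: "Q0 \<noteq> {}" "Q1 \<noteq> {}"
    and neg0: "\<forall>q\<in>Q0. \<forall>i. q$i \<le> 0" and neg1: "\<forall>q\<in>Q1. \<forall>i. q$i \<le> 0"
    and cl: "closed Q1" and cv: "convex Q1"
    and comp: "\<forall>q\<in>Q1. \<forall>y\<in>neg_orthant. q + y \<in> Q1"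
    and AE: "AE x in lborel. x \<in> pos_orthant \<longrightarrow> phiQ Q1 x = phiQ Q0 x"
  shows "Q0 \<subseteq> Q1"
proof
  fix y assume y: "y \<in> Q0"
  show "y \<in> Q1"
  proof (rule ccontr)
    assume yn: "y \<notin> Q1"
    obtain w \<beta> where w: "w \<bullet> y < \<beta>" "\<forall>q\<in>Q1. w \<bullet> q > \<beta>"
      using separating_hyperplane_closed_point[OF cv cl yn] by blast
    define x where "x = - w"
    have xq: "x \<bullet> q < - \<beta>" if "q \<in> Q1" for q using w that by (simp add: x_def)
    have xy: "- (x \<bullet> y) < \<beta>" using w by (simp add: x_def)
    have xp: "x \<in> pos_orthant"
    proof (unfold pos_orthant_def, intro CollectI allI, rule ccontr)
      fix i assume "\<not> 0 \<le> x$i"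
      then have xi: "x$i < 0" by simp
      obtain q where q: "q \<in> Q1" using ne by auto
      define s where "s = (\<bar>\<beta>\<bar> + \<bar>x \<bullet> q\<bar> + 1) / (- x$i)"
      have s: "0 < s" unfolding s_def by (intro divide_pos_pos) (use xi in auto)
      define z :: "real^'n" where "z = (\<chi> j. if j = i then - s else 0)"
      have "z \<in> neg_orthant" using s by (simp add: neg_orthant_def z_def)
      then have "q + z \<in> Q1" using comp q by auto
      then have "x \<bullet> (q + z) < - \<beta>" by (rule xq)
      moreover have "x \<bullet> z = - s * x$i"
        by (simp add: z_def inner_vec_def if_distrib[of "\<lambda>u. x$_ * u"] cong: if_cong)
      moreover have "- s * x$i = \<bar>\<beta>\<bar> + \<bar>x \<bullet> q\<bar> + 1" using xi by (simp add: s_def)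
      ultimately show False by (simp add: inner_add_right)
    qed
    have phi1x: "\<beta> \<le> phiQ Q1 x"
    proof (rule phiQ_ge[OF ne(2)])
      fix q assume "q \<in> Q1"
      then show "\<beta> \<le> max 0 (- (x \<bullet> q))" using xq[of q] by simp
    qed
    define g where "g = \<beta> + x \<bullet> y"
    have g: "0 < g" using xy by (simp add: g_def)
    define S where "S = (\<Sum>j\<in>UNIV. \<bar>y$j\<bar>) + 1"
    have S: "1 \<le> S" by (simp add: S_def sum_nonneg)
    define e where "e = g / (2 * S)"
    have e: "0 < e" using g S by (simp add: e_def)
    have eS: "e * (S - 1) < g"
    proof -
      have "e * S = g / 2" using S by (simp add: e_def)
      then show ?thesis using g e by (simp add: algebra_simps)
    qed
    show False
    proof (rule AE_cbox_contra[OF AE, of x "x + (\<chi> i. e)"])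
      show "\<And>i. x$i < (x + (\<chi> i. e))$i" using e by simp
      fix z :: "real^'n" assume z: "z \<in> cbox x (x + (\<chi> i. e))"
      have zx: "\<And>i. x$i \<le> z$i" and zx2: "\<And>i. z$i \<le> x$i + e" using z by (auto simp: mem_box_cart)
      have zp: "z \<in> pos_orthant" using xp zx by (auto simp: pos_orthant_def intro: order_trans)
      have d: "z - x \<in> cbox 0 (\<chi> i. e)" unfolding mem_box_cart
      proof (intro allI)
        fix i show "(0::real^'n)$i \<le> (z-x)$i \<and> (z-x)$i \<le> (\<chi> i. e)$i" using zx[of i] zx2[of i] by simp
      qed
      have "phiQ Q0 z \<le> max 0 (- (z \<bullet> y))" by (rule phiQ_le[OF y])
      also have "max 0 (- (z \<bullet> y)) = - (z \<bullet> y)"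
        using inner_pos_neg[OF zp, of y] neg0 y by auto
      also have "- (z \<bullet> y) = - (x \<bullet> y) + - ((z - x) \<bullet> y)" by (simp add: inner_diff_left)
      also have "- ((z - x) \<bullet> y) \<le> e * (S - 1)" using box_bound[OF d, of y] by (simp add: S_def)
      finally have "phiQ Q0 z < \<beta>" using eS xy g by (simp add: g_def)
      also have "\<beta> \<le> phiQ Q1 x" by (rule phi1x)
      also have "phiQ Q1 x \<le> phiQ Q1 z"
      proof (rule phiQ_ge[OF ne(2)])
        fix q assume q: "q \<in> Q1"
        have "phiQ Q1 x \<le> max 0 (- (x \<bullet> q))" by (rule phiQ_le[OF q])
        also have "- (x \<bullet> q) \<le> - (z \<bullet> q)"
        proof -
          have "0 \<le> (\<Sum>j\<in>UNIV. (z - x)$j * (- q$j))"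
            using zx neg1 q by (intro sum_nonneg mult_nonneg_nonneg) auto
          also have "(\<Sum>j\<in>UNIV. (z - x)$j * (- q$j)) = - ((z - x) \<bullet> q)"
            by (rule neg_inner_sum[symmetric])
          finally show ?thesis by (simp add: inner_diff_left)
        qed
        then have "max 0 (- (x \<bullet> q)) \<le> max 0 (- (z \<bullet> q))" by simp
        finally show "phiQ Q1 x \<le> max 0 (- (z \<bullet> q))" .
      qed
      finally show "\<not> (z \<in> pos_orthant \<longrightarrow> phiQ Q1 z = phiQ Q0 z)" using zp by auto
    qed
  qed
qed


lemma prod_shift_cyclic:
  fixes g :: "nat \<Rightarrow> 'a::comm_monoid_mult"
  assumes "g N = g 0"
  shows "(\<Prod>k<N. g (Suc k)) = (\<Prod>k<N. g k)"
proof (cases N)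
  case 0 then show ?thesis by simp
next
  case (Suc M)
  have "(\<Prod>k<N. g (Suc k)) = (\<Prod>k<M. g (Suc k)) * g (Suc M)" unfolding Suc by (rule prod.lessThan_Suc)
  moreover have "(\<Prod>k<N. g k) = g 0 * (\<Prod>k<M. g (Suc k))" unfolding Suc by (rule prod.lessThan_Suc_shift)
  ultimately show ?thesis using assms Suc by (simp add: mult.commute)
qed

lemma root_unity_pow: "0 < N \<Longrightarrow> cis (2 * pi / N) ^ N = 1"
  by (simp add: Complex.DeMoivre)

lemma R_invariant:
  fixes p :: "complex \<Rightarrow> complex"
  assumes N: "0 < N"
  defines "\<omega> \<equiv> cis (2 * pi / N)"
  shows "(\<Prod>k<N. p (w * \<omega> ^ j * \<omega> ^ k)) = (\<Prod>k<N. p (w * \<omega> ^ k))"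
proof (induction j)
  case 0 then show ?case by simp
next
  case (Suc j)
  have "(\<Prod>k<N. p (w * \<omega> ^ Suc j * \<omega> ^ k)) = (\<Prod>k<N. p (w * \<omega> ^ j * \<omega> ^ Suc k))"
    by (simp add: algebra_simps)
  also have "\<dots> = (\<Prod>k<N. p (w * \<omega> ^ j * \<omega> ^ k))"
    by (rule prod_shift_cyclic[where g = "\<lambda>k. p (w * \<omega> ^ j * \<omega> ^ k)"])
       (simp add: \<omega>_def root_unity_pow[OF N])
  finally show ?case using Suc by simp
qed

lemma maxmod_circle:
  fixes R :: "complex \<Rightarrow> complex"
  assumes "R holomorphic_on UNIV"
  shows "\<exists>z. cmod z = 1 \<and> cmod (R 0) \<le> cmod (R z)"
proof -
  have cont: "continuous_on UNIV R" using assms holomorphic_on_imp_continuous_on by blast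
  have "\<exists>x\<in>sphere 0 1. \<forall>y\<in>sphere 0 1. cmod (R y) \<le> cmod (R x)"
    by (intro continuous_attains_sup compact_sphere continuous_on_norm continuous_on_subset[OF cont])
       (auto simp: sphere_def dist_norm intro!: exI[of _ 1])
  then obtain z0 where z0: "z0 \<in> sphere 0 1" "\<And>y. y \<in> sphere 0 1 \<Longrightarrow> cmod (R y) \<le> cmod (R z0)"
    by blast
  have "cmod (R 0) \<le> cmod (R z0)"
  proof (rule maximum_modulus_frontier[of R "cball 0 1"])
    show "R holomorphic_on interior (cball 0 1)" using assms holomorphic_on_subset by blast
    show "continuous_on (closure (cball 0 1)) R" using cont continuous_on_subset by blast
  qed (use z0 in auto)
  then show ?thesis using z0 by (intro exI[of _ z0]) (auto simp: dist_norm)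
qed

lemma cis_periodic_nat: "cis (x + real j * (2 * pi)) = cis x"
proof -
  have "cis (x + real j * (2 * pi)) = cis x * cis (2 * pi) ^ j"
    by (simp add: Complex.DeMoivre cis_mult[symmetric] algebra_simps)
  then show ?thesis by simp
qed

lemma pick_phi:
  fixes p :: "complex \<Rightarrow> complex"
  assumes N: "0 < N" and z: "cmod z = 1"
  defines "\<omega> \<equiv> cis (2 * pi / N)"
  shows "\<exists>\<phi>. 0 \<le> \<phi> \<and> \<phi> \<le> 2 * pi / N \<and>
     (\<Prod>k<N. p (cis \<phi> * \<omega> ^ k)) = (\<Prod>k<N. p (z * \<omega> ^ k))"
proof -
  define d where "d = 2 * pi / N"
  have d: "0 < d" using N by (simp add: d_def)
  define \<alpha> where "\<alpha> = Arg z + 2 * pi"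
  have \<alpha>: "0 < \<alpha>" using Arg_bounded[of z] by (simp add: \<alpha>_def)
  have z0: "z \<noteq> 0" using z by auto
  have cz: "cis \<alpha> = z"
  proof -
    have "cis \<alpha> = cis (Arg z + real 1 * (2 * pi))" by (simp add: \<alpha>_def)
    also have "\<dots> = cis (Arg z)" by (rule cis_periodic_nat)
    also have "\<dots> = sgn z" using z0 by (rule cis_Arg)
    also have "\<dots> = z" using z by (simp add: sgn_div_norm)
    finally show ?thesis .
  qed
  define j where "j = nat \<lfloor>\<alpha> / d\<rfloor>"
  have fl: "real j \<le> \<alpha> / d" "\<alpha> / d < real j + 1"
    using \<alpha> d by (auto simp: j_def)
  define \<phi> where "\<phi> = \<alpha> - real j * d"
  have \<phi>: "0 \<le> \<phi>" "\<phi> \<le> d"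
    using fl d by (auto simp: \<phi>_def field_simps)
  have "z = cis \<phi> * \<omega> ^ j"
    by (simp add: cz[symmetric] \<omega>_def Complex.DeMoivre cis_mult \<phi>_def d_def)
  then have "(\<Prod>k<N. p (z * \<omega> ^ k)) = (\<Prod>k<N. p (cis \<phi> * \<omega> ^ j * \<omega> ^ k))" by simp
  also have "\<dots> = (\<Prod>k<N. p (cis \<phi> * \<omega> ^ k))"
    unfolding \<omega>_def by (rule R_invariant[OF N])
  finally show ?thesis using \<phi> by (intro exI[of _ \<phi>]) (simp add: d_def)
qed


lemma riemann_upper:
  fixes h :: "real \<Rightarrow> real"
  assumes hc: "continuous_on {0..2*pi} h" and e: "0 < \<epsilon>"
  shows "\<exists>N0>0. \<forall>N\<ge>N0. \<forall>\<phi>. 0 \<le> \<phi> \<and> \<phi> \<le> 2*pi/N \<longrightarrow>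
           (2*pi/N) * (\<Sum>k<N. h (\<phi> + real k * (2*pi/N))) \<le> integral {0..2*pi} h + \<epsilon>"
proof -
  define L where "L = 2*pi"
  have L: "0 < L" by (simp add: L_def)
  have "uniformly_continuous_on {0..L} h"
    by (rule compact_uniformly_continuous) (use hc in \<open>auto simp: L_def\<close>)
  moreover have "0 < \<epsilon> / L" using e L by simp
  ultimately obtain \<delta> where \<delta>: "\<delta> > 0"
    "\<And>x x'. x \<in> {0..L} \<Longrightarrow> x' \<in> {0..L} \<Longrightarrow> dist x' x < \<delta> \<Longrightarrow> dist (h x') (h x) < \<epsilon> / L"
    unfolding uniformly_continuous_on_def by metis
  define N0 where "N0 = nat \<lceil>L/\<delta>\<rceil> + 1"
  have int: "h integrable_on {a..b}" if "0 \<le> a" "b \<le> L" for a b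
    by (rule integrable_continuous_real, rule continuous_on_subset[OF hc]) (use that in \<open>auto simp: L_def\<close>)
  show ?thesis
  proof (intro exI[of _ N0] conjI allI impI)
    show "0 < N0" by (simp add: N0_def)
    fix N :: nat and \<phi> :: real assume N: "N0 \<le> N" and \<phi>: "0 \<le> \<phi> \<and> \<phi> \<le> 2*pi/N"
    define d where "d = L / N"
    have Npos: "0 < N" using N by (simp add: N0_def)
    have d: "0 < d" using Npos L by (simp add: d_def)
    have Nd: "real N * d = L" using Npos by (simp add: d_def)
    have "L / \<delta> < real N"
    proof -
      have "L / \<delta> \<le> real (nat \<lceil>L/\<delta>\<rceil>)" by linarith
      then show ?thesis using N by (simp add: N0_def)
    qed
    then have d\<delta>: "d < \<delta>" using \<delta>(1) Npos by (simp add: d_def field_simps)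
    have part: "m \<le> N \<Longrightarrow> integral {0..real m * d} h = (\<Sum>k<m. integral {real k * d..real (Suc k) * d} h)" for m
    proof (induction m)
      case 0 then show ?case by simp
    next
      case (Suc m)
      have le: "real (Suc m) * d \<le> L" using Suc.prems Nd d
        by (metis mult_right_mono of_nat_le_iff less_imp_le)
      have "integral {0..real m * d} h + integral {real m * d..real (Suc m) * d} h = integral {0..real (Suc m) * d} h"
        by (rule Henstock_Kurzweil_Integration.integral_combine) (use d le in \<open>auto intro!: int\<close>)
      then show ?case using Suc by simp
    qed
    have lb: "d * (h (\<phi> + real k * d) - \<epsilon>/L) \<le> integral {real k * d..real (Suc k) * d} h" if k: "k < N" for k
    proof -
      define \<theta> where "\<theta> = \<phi> + real k * d"
      have \<phi>d: "\<phi> \<le> d" using \<phi> by (simp add: d_def L_def)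
      have kd: "real (Suc k) * d \<le> L" using k Nd d by (metis Suc_leI mult_right_mono of_nat_le_iff less_imp_le)
      have \<theta>: "real k * d \<le> \<theta>" "\<theta> \<le> real (Suc k) * d" using \<phi> \<phi>d by (auto simp: \<theta>_def algebra_simps)
      have k0: "0 \<le> real k * d" using d by simp
      have "integral {real k * d..real (Suc k) * d} (\<lambda>_. h \<theta> - \<epsilon>/L) \<le> integral {real k * d..real (Suc k) * d} h"
      proof (rule integral_le)
        show "h integrable_on {real k * d..real (Suc k) * d}" using k0 kd by (intro int) auto
        fix x assume x: "x \<in> {real k * d..real (Suc k) * d}"
        have "dist x \<theta> < \<delta>"
        proof -
          have "\<bar>x - \<theta>\<bar> \<le> d" using x \<theta> by (auto simp: algebra_simps abs_le_iff)
          then show ?thesis using d\<delta> by (simp add: dist_real_def)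
        qed
        then have "dist (h x) (h \<theta>) < \<epsilon> / L"
          by (intro \<delta>(2)) (use x \<theta> k0 kd in auto)
        then show "h \<theta> - \<epsilon>/L \<le> h x" by (auto simp: dist_real_def abs_less_iff)
      qed auto
      moreover have "Henstock_Kurzweil_Integration.content {real k * d..real (Suc k) * d} = d"
        using d by (simp add: algebra_simps)
      moreover have "integral {real k * d..real (Suc k) * d} (\<lambda>_. h \<theta> - \<epsilon>/L) = Henstock_Kurzweil_Integration.content {real k * d..real (Suc k) * d} * (h \<theta> - \<epsilon>/L)"
        by (simp only: integral_const_real) simp
      ultimately show ?thesis by (simp add: \<theta>_def)
    qed
    have "d * (\<Sum>k<N. h (\<phi> + real k * d)) - \<epsilon> = (\<Sum>k<N. d * (h (\<phi> + real k * d) - \<epsilon>/L))"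
      using Nd L by (simp add: sum_subtractf sum_distrib_left algebra_simps)
    also have "\<dots> \<le> (\<Sum>k<N. integral {real k * d..real (Suc k) * d} h)"
      by (intro sum_mono lb) auto
    also have "\<dots> = integral {0..L} h" using part[of N] Nd by simp
    finally show "(2*pi/N) * (\<Sum>k<N. h (\<phi> + real k * (2*pi/N))) \<le> integral {0..2*pi} h + \<epsilon>"
      by (simp add: d_def L_def)
  qed
qed



lemma jensen_ineq:
  fixes p :: "complex \<Rightarrow> complex" and h :: "real \<Rightarrow> real"
  assumes hol: "p holomorphic_on UNIV" and h: "continuous_on {0..2*pi} h" and p0: "p 0 \<noteq> 0"
    and maj: "\<And>\<theta>. \<theta> \<in> {0..2*pi} \<Longrightarrow> p (cis \<theta>) \<noteq> 0 \<Longrightarrow> ln (cmod (p (cis \<theta>))) \<le> h \<theta>"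
  shows "ln (cmod (p 0)) \<le> integral {0..2*pi} h / (2*pi)"
proof -
  have "2*pi * ln (cmod (p 0)) \<le> integral {0..2*pi} h"
  proof (rule field_le_epsilon)
    fix \<epsilon> :: real assume e: "0 < \<epsilon>"
    obtain N where Npos: "0 < N" and RS: "\<And>\<phi>. 0 \<le> \<phi> \<and> \<phi> \<le> 2*pi/N \<Longrightarrow>
           (2*pi/N) * (\<Sum>k<N. h (\<phi> + real k * (2*pi/N))) \<le> integral {0..2*pi} h + \<epsilon>"
      using riemann_upper[OF h e] by blast
    define \<omega> where "\<omega> = cis (2 * pi / N)"
    define R where "R = (\<lambda>w. \<Prod>k<N. p (w * \<omega> ^ k))"
    have hk: "(\<lambda>w. p (w * c)) holomorphic_on UNIV" for c
    proof -
      have "(p \<circ> (\<lambda>w. w * c)) holomorphic_on UNIV"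
        by (rule holomorphic_on_compose[OF _ holomorphic_on_subset[OF hol]]) (auto intro: holomorphic_intros)
      then show ?thesis by (simp add: o_def)
    qed
    have "R holomorphic_on UNIV" unfolding R_def by (intro holomorphic_on_prod hk)
    then obtain z where z: "cmod z = 1" "cmod (R 0) \<le> cmod (R z)" using maxmod_circle by blast
    obtain \<phi> where \<phi>: "0 \<le> \<phi>" "\<phi> \<le> 2 * pi / N" "R (cis \<phi>) = R z"
      using pick_phi[OF Npos z(1), of p] unfolding R_def \<omega>_def by blast
    define \<theta> where "\<theta> = (\<lambda>k::nat. \<phi> + real k * (2*pi/N))"
    have cisk: "cis \<phi> * \<omega> ^ k = cis (\<theta> k)" for k
      by (simp add: \<omega>_def \<theta>_def Complex.DeMoivre cis_mult)
    have R0: "R 0 = p 0 ^ N" by (simp add: R_def)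
    have big: "cmod (p 0) ^ N \<le> (\<Prod>k<N. cmod (p (cis (\<theta> k))))"
    proof -
      have "cmod (p 0) ^ N = cmod (R 0)" by (simp add: R0 norm_power)
      also have "\<dots> \<le> cmod (R (cis \<phi>))" using z \<phi> by simp
      also have "\<dots> = (\<Prod>k<N. cmod (p (cis (\<theta> k))))" by (simp add: R_def cisk prod_norm)
      finally show ?thesis .
    qed
    have pos0: "0 < cmod (p 0) ^ N" using p0 by simp
    have nz: "p (cis (\<theta> k)) \<noteq> 0" if "k < N" for k
    proof
      assume "p (cis (\<theta> k)) = 0"
      then have e0: "(\<Prod>k<N. cmod (p (cis (\<theta> k)))) = 0" using that by (intro prod_zero) auto
      show False using big pos0 unfolding e0 by linarith
    qed
    have \<theta>range: "\<theta> k \<in> {0..2*pi}" if "k < N" for k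
    proof -
      have "real k + 1 \<le> real N" using that by simp
      have "\<theta> k \<le> 2*pi/N + real k * (2*pi/N)" using \<phi>(2) by (simp add: \<theta>_def)
      also have "\<dots> = (real k + 1) * (2*pi/N)" using Npos by (simp add: field_simps)
      also have "\<dots> \<le> real N * (2*pi/N)" using \<open>real k + 1 \<le> real N\<close> by (intro mult_right_mono) auto
      also have "\<dots> = 2 * pi" using Npos by simp
      finally have "\<theta> k \<le> 2 * pi" .
      moreover have "0 \<le> \<theta> k" using \<phi>(1) by (simp add: \<theta>_def)
      ultimately show ?thesis by simp
    qed
    have "real N * ln (cmod (p 0)) = ln (cmod (p 0) ^ N)" using p0 by (simp add: ln_realpow)
    also have "\<dots> \<le> ln (\<Prod>k<N. cmod (p (cis (\<theta> k))))"
      using big pos0 by (subst ln_le_cancel_iff) auto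
    also have "\<dots> = (\<Sum>k<N. ln (cmod (p (cis (\<theta> k)))))"
      using nz by (subst ln_prod) auto
    also have "\<dots> \<le> (\<Sum>k<N. h (\<theta> k))"
      using nz \<theta>range maj by (intro sum_mono) auto
    finally have S: "real N * ln (cmod (p 0)) \<le> (\<Sum>k<N. h (\<theta> k))" .
    have "2*pi * ln (cmod (p 0)) = (2*pi/N) * (real N * ln (cmod (p 0)))" using Npos by simp
    also have "\<dots> \<le> (2*pi/N) * (\<Sum>k<N. h (\<theta> k))"
      using S by (intro mult_left_mono) auto
    also have "\<dots> \<le> integral {0..2*pi} h + \<epsilon>" using RS[of \<phi>] \<phi> by (simp add: \<theta>_def)
    finally show "2*pi * ln (cmod (p 0)) \<le> integral {0..2*pi} h + \<epsilon>" .
  qed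
  then show ?thesis by (simp add: field_simps)
qed




lemma ln_lt_iff:
  fixes m c :: real
  assumes "0 < m" shows "ln m < c \<longleftrightarrow> m < exp c"
proof -
  have "exp (ln m) < exp c \<longleftrightarrow> ln m < c" by simp
  then show ?thesis using assms by simp
qed

definition uprod :: "complex^'n \<Rightarrow> ereal" where
  "uprod z = (if (\<Prod>l\<in>UNIV. z$l) = 0 then -\<infinity> else ereal (ln (cmod (\<Prod>l\<in>UNIV. z$l))))"

lemma psh_uprod: "psh_on UNIV (uprod :: complex^'n \<Rightarrow> ereal)"
  unfolding psh_on_def
proof (intro conjI allI impI ballI)
  show "open (UNIV :: (complex^'n) set)" by simp
  fix z :: "complex^'n" show "uprod z < \<infinity>" by (simp add: uprod_def)
next
  fix c :: real
  have eq: "{z \<in> UNIV. uprod (z::complex^'n) < ereal c} = {z :: complex^'n. cmod (\<Prod>l\<in>UNIV. z$l) < exp c}"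
  proof (rule set_eqI)
    fix z :: "complex^'n"
    show "z \<in> {z \<in> UNIV. uprod z < ereal c} \<longleftrightarrow> z \<in> {z. cmod (\<Prod>l\<in>UNIV. z$l) < exp c}"
    proof (cases "(\<Prod>l\<in>UNIV. z$l) = 0")
      case True
      show ?thesis unfolding uprod_def mem_Collect_eq by (simp only: True) simp
    next
      case False
      then have "0 < cmod (\<Prod>l\<in>UNIV. z$l)" by simp
      then show ?thesis unfolding uprod_def mem_Collect_eq using False by (simp add: ln_lt_iff)
    qed
  qed
  have c1: "continuous_on UNIV (\<lambda>z::complex^'n. cmod (\<Prod>l\<in>UNIV. z$l))"
    by (intro continuous_on_norm continuous_on_prod continuous_on_component continuous_on_id)
  have "open {z :: complex^'n. cmod (\<Prod>l\<in>UNIV. z$l) < exp c}"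
    using open_Collect_less[OF c1 continuous_on_const] by simp
  then show "openin (top_of_set UNIV) {z \<in> UNIV. uprod (z::complex^'n) < ereal c}"
    unfolding eq by simp
next
  fix a b :: "complex^'n" and h :: "real \<Rightarrow> real"
  assume h: "continuous_on {0..2*pi} h"
    and maj: "\<forall>\<theta>\<in>{0..2*pi}. uprod (\<chi> l. a$l + cis \<theta> * b$l) \<le> ereal (h \<theta>)"
  show "uprod a \<le> ereal (integral {0..2*pi} h / (2*pi))"
  proof (cases "(\<Prod>l\<in>UNIV. a$l) = 0")
    case True then show ?thesis by (simp add: uprod_def)
  next
    case False
    define p where "p = (\<lambda>\<zeta>. \<Prod>l\<in>UNIV. a$l + \<zeta> * b$l)"
    have hol: "p holomorphic_on UNIV" unfolding p_def by (intro holomorphic_intros)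
    have p0: "p 0 \<noteq> 0" using False by (simp add: p_def)
    have "ln (cmod (p 0)) \<le> integral {0..2*pi} h / (2*pi)"
    proof (rule jensen_ineq[OF hol h p0])
      fix \<theta> assume th: "\<theta> \<in> {0..2*pi}" and nz: "p (cis \<theta>) \<noteq> 0"
      have "uprod (\<chi> l. a$l + cis \<theta> * b$l) = ereal (ln (cmod (p (cis \<theta>))))"
        using nz by (simp add: uprod_def p_def)
      moreover have "uprod (\<chi> l. a$l + cis \<theta> * b$l) \<le> ereal (h \<theta>)" using maj th by blast
      ultimately show "ln (cmod (p (cis \<theta>))) \<le> h \<theta>" by simp
    qed
    then show ?thesis using False by (simp add: uprod_def p_def)
  qed
qed




lemma zero_coord:
  fixes K :: "(complex^'n) set" and z :: "complex^'n"
  assumes re: "reinhardt K" and em: "Log_set K = {}" and z: "z \<in> K"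
  shows "(\<Prod>l\<in>UNIV. z$l) = 0"
proof (rule ccontr)
  assume "(\<Prod>l\<in>UNIV. z$l) \<noteq> 0"
  then have nz: "z$l \<noteq> 0" for l by auto
  define \<theta> :: "real^'n" where "\<theta> = (\<chi> l. - Arg (z$l))"
  define s :: "real^'n" where "s = (\<chi> l. ln (cmod (z$l)))"
  have "(\<chi> l. cis (\<theta>$l) * z$l) \<in> K" using re z unfolding reinhardt_def by blast
  moreover have "(\<chi> l. cis (\<theta>$l) * z$l) = (\<chi> l. complex_of_real (exp (s$l)))"
  proof -
    have "cis (- Arg w) * w = complex_of_real (cmod w)" if "w \<noteq> 0" for w :: complex
    proof -
      have "cis (- Arg w) * w = cis (- Arg w) * rcis (cmod w) (Arg w)" by (simp add: rcis_cmod_Arg)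
      also have "\<dots> = complex_of_real (cmod w)" by (simp add: rcis_def cis_mult)
      finally show ?thesis .
    qed
    then show ?thesis using nz by (simp add: \<theta>_def s_def vec_eq_iff)
  qed
  ultimately have "s \<in> Log_set K" by (simp add: Log_set_def)
  then show False using em by simp
qed

lemma nonempty_log:
  fixes K :: "(complex^'n) set"
  assumes re: "reinhardt K" and np: "\<not> pluripolar K"
  shows "Log_set K \<noteq> {}"
proof
  assume em: "Log_set K = {}"
  have "pluripolar K"
    unfolding pluripolar_def
  proof
    fix p assume "p \<in> K"
    show "\<exists>V u. p \<in> V \<and> open V \<and> connected V \<and> psh_on V u \<and> (\<exists>z\<in>V. u z \<noteq> -\<infinity>) \<and> (\<forall>z\<in>K \<inter> V. u z = -\<infinity>)"
    proof (intro exI[of _ UNIV] exI[of _ uprod] conjI)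
      show "\<exists>z\<in>UNIV. uprod z \<noteq> -\<infinity>"
        by (intro bexI[of _ "\<chi> l. 1"]) (auto simp: uprod_def)
      show "\<forall>z\<in>K \<inter> UNIV. uprod z = -\<infinity>"
        using zero_coord[OF re em] by (auto simp: uprod_def)
    qed (auto simp: psh_uprod)
  qed
  then show False using np by simp
qed



lemma log_closed:
  fixes K :: "(complex^'n) set"
  assumes "compact K"
  shows "closed (Log_set K)"
proof -
  define f :: "real^'n \<Rightarrow> complex^'n" where "f = (\<lambda>s. \<chi> l. complex_of_real (exp (s$l)))"
  have "continuous_on UNIV f" unfolding f_def by (intro continuous_intros)
  then have "\<And>x. continuous (at x) f" by (simp add: continuous_on_eq_continuous_at)
  moreover have "Log_set K = f -` K" by (auto simp: Log_set_def f_def)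
  ultimately show ?thesis using continuous_closed_vimage compact_imp_closed[OF assms] by metis
qed

lemma log_bound:
  fixes K :: "(complex^'n) set"
  assumes sub: "K \<subseteq> unit_polydisk" and cK: "compact K" and ne: "Log_set K \<noteq> {}"
  shows "\<exists>d>0. \<forall>q\<in>Log_set K. \<forall>i. q$i \<le> -d"
proof -
  have Kne: "K \<noteq> {}" using ne by (auto simp: Log_set_def)
  have "\<exists>m. m < 1 \<and> (\<forall>z\<in>K. cmod (z$i) \<le> m)" for i
  proof -
    have "continuous_on K (\<lambda>z::complex^'n. cmod (z$i))"
      by (intro continuous_intros)
    then obtain z0 where z0: "z0 \<in> K" "\<And>z. z \<in> K \<Longrightarrow> cmod (z$i) \<le> cmod (z0$i)"
      using continuous_attains_sup[OF cK Kne] by blast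
    have "cmod (z0$i) < 1" using sub z0(1) by (auto simp: unit_polydisk_def)
    then show ?thesis using z0 by blast
  qed
  then obtain m where m: "\<And>i. m i < 1" "\<And>i z. z \<in> K \<Longrightarrow> cmod (z$i) \<le> m i" by metis
  define M where "M = max (1/2) (Max (range m))"
  have M1: "M < 1" using m(1) by (auto simp: M_def)
  have M0: "0 < M" by (simp add: M_def)
  have mM: "m i \<le> M" for i
  proof -
    have "finite (range m)" by simp
    then have "m i \<le> Max (range m)" by (rule Max_ge) simp
    then show ?thesis by (simp add: M_def le_max_iff_disj)
  qed
  show ?thesis
  proof (intro exI[of _ "- ln M"] conjI ballI allI)
    show "0 < - ln M" using M0 M1 by simp
    fix q i assume q: "q \<in> Log_set K"
    then have "(\<chi> l. complex_of_real (exp (q$l))) \<in> K" by (simp add: Log_set_def)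
    from m(2)[OF this, of i] have "exp (q$i) \<le> m i" by simp
    then have "exp (q$i) \<le> M" using mM[of i] by linarith
    then have "q$i \<le> ln M" using M0 by (simp add: ln_ge_iff)
    then show "q$i \<le> - (- ln M)" by simp
  qed
qed

theorem mainTheorem5:
  fixes K0 K1 :: "(complex^'n) set"
  assumes "K0 \<subseteq> unit_polydisk" "K1 \<subseteq> unit_polydisk"
    and "compact K0" "compact K1"
    and "reinhardt K0" "reinhardt K1"
    and "complete_log_convex K0" "complete_log_convex K1"
    and "\<not> pluripolar K0" "\<not> pluripolar K1"
  shows "(\<forall>t. 0 < t \<and> t < 1 \<longrightarrow>
            covol (copolar (mink_comb t (Log_set K0) (Log_set K1)))
              \<le> covol (copolar (Log_set K0)) powr (1 - t) * covol (copolar (Log_set K1)) powr t)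
       \<and> ((\<exists>t. 0 < t \<and> t < 1 \<and>
            covol (copolar (mink_comb t (Log_set K0) (Log_set K1)))
              = covol (copolar (Log_set K0)) powr (1 - t) * covol (copolar (Log_set K1)) powr t)
          \<longrightarrow> Log_set K0 = Log_set K1)"
proof -
  define Q0 where "Q0 = Log_set K0"
  define Q1 where "Q1 = Log_set K1"
  have ne0: "Q0 \<noteq> {}" unfolding Q0_def by (rule nonempty_log[OF assms(5) assms(9)])
  have ne1: "Q1 \<noteq> {}" unfolding Q1_def by (rule nonempty_log[OF assms(6) assms(10)])
  obtain d0 where d0: "0 < d0" "\<forall>q\<in>Q0. \<forall>i. q$i \<le> -d0"
    using log_bound[OF assms(1) assms(3)] ne0 unfolding Q0_def by blast
  obtain d1 where d1: "0 < d1" "\<forall>q\<in>Q1. \<forall>i. q$i \<le> -d1"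
    using log_bound[OF assms(2) assms(4)] ne1 unfolding Q1_def by blast
  define d where "d = min d0 d1"
  have d: "0 < d" using d0 d1 by (simp add: d_def)
  have b0: "\<forall>q\<in>Q0. \<forall>i. q$i \<le> -d"
  proof (intro ballI allI)
    fix q i assume "q \<in> Q0"
    then have "q$i \<le> -d0" using d0 by blast
    moreover have "d \<le> d0" by (simp add: d_def)
    ultimately show "q$i \<le> -d" by linarith
  qed
  have b1: "\<forall>q\<in>Q1. \<forall>i. q$i \<le> -d"
  proof (intro ballI allI)
    fix q i assume "q \<in> Q1"
    then have "q$i \<le> -d1" using d1 by blast
    moreover have "d \<le> d1" by (simp add: d_def)
    ultimately show "q$i \<le> -d" by linarith
  qed
  have neg0: "\<forall>q\<in>Q0. \<forall>i. q$i \<le> 0" using b0 d by (meson order_trans neg_le_0_iff_le less_imp_le)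
  have neg1: "\<forall>q\<in>Q1. \<forall>i. q$i \<le> 0" using b1 d by (meson order_trans neg_le_0_iff_le less_imp_le)
  have cl0: "closed Q0" unfolding Q0_def by (rule log_closed[OF assms(3)])
  have cl1: "closed Q1" unfolding Q1_def by (rule log_closed[OF assms(4)])
  have cv0: "convex Q0" and comp0: "\<forall>q\<in>Q0. \<forall>y\<in>neg_orthant. q + y \<in> Q0"
    using assms(7) unfolding Q0_def complete_log_convex_def by auto
  have cv1: "convex Q1" and comp1: "\<forall>q\<in>Q1. \<forall>y\<in>neg_orthant. q + y \<in> Q1"
    using assms(8) unfolding Q1_def complete_log_convex_def by auto
  note M = mainA[OF ne0 ne1 d b0 b1]
  show ?thesis
    unfolding Q0_def[symmetric] Q1_def[symmetric]
  proof (intro conjI allI impI)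
    fix t :: real assume "0 < t \<and> t < 1"
    then show "covol (copolar (mink_comb t Q0 Q1)) \<le> covol (copolar Q0) powr (1 - t) * covol (copolar Q1) powr t"
      using M by blast
  next
    assume "\<exists>t. 0 < t \<and> t < 1 \<and> covol (copolar (mink_comb t Q0 Q1)) = covol (copolar Q0) powr (1 - t) * covol (copolar Q1) powr t"
    then obtain t where t: "0 < t" "t < 1"
      "covol (copolar (mink_comb t Q0 Q1)) = covol (copolar Q0) powr (1 - t) * covol (copolar Q1) powr t"
      by blast
    obtain \<kappa> where k: "AE x in lborel. x \<in> pos_orthant \<longrightarrow> phiQ Q1 x = phiQ Q0 x + \<kappa>"
      using M[OF t(1) t(2)] t(3) by blast
    have "\<kappa> = 0" by (rule kappa_zero[OF ne0 ne1 k])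
    then have AE1: "AE x in lborel. x \<in> pos_orthant \<longrightarrow> phiQ Q1 x = phiQ Q0 x" using k by simp
    have AE0: "AE x in lborel. x \<in> pos_orthant \<longrightarrow> phiQ Q0 x = phiQ Q1 x"
      using AE1 by eventually_elim auto
    have "Q0 \<subseteq> Q1" by (rule sep_sub[OF ne0 ne1 neg0 neg1 cl1 cv1 comp1 AE1])
    moreover have "Q1 \<subseteq> Q0" by (rule sep_sub[OF ne1 ne0 neg1 neg0 cl0 cv0 comp0 AE0])
    ultimately show "Q0 = Q1" by blast
  qed
qed

end
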